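(* Let $n\ge2$, let $c=(c_{i,j})$ be an $n\times(n+1)$ matrix with entries in $\{0,1\}$, $\sigma_1,\ldots,\sigma_n>0$, $\gamma_1,\ldots,\gamma_{n+1}>0$. Let $\mathbf{X}=(X_1,\ldots,X_n)'$ have decumulative distribution function \[ \mathbf{P}[X_1>x_1,\ldots,X_n>x_n]=\prod_{j=1}^{n+1}\left(1+\sum_{i=1}^n\frac{c_{i,j}}{\sigma_i}x_i\right)^{-\gamma_j},\quad (x_1,\ldots,x_n)'\in(0,\infty)^n. \] For $1\le k\ne l\le n$ let $\gamma^\ast_{c,k}=\sum_jc_{k,j}\gamma_j$, $\gamma^\ast_{c,l}=\sum_jc_{l,j}\gamma_j$ and $\gamma_{c,(k,l)}=\sum_{j=1}^{n+1}c_{k,j}c_{l,j}\gamma_j$. If $\gamma^\ast_{c,k}>2$ and $\gamma^\ast_{c,l}>2$, then \[ \mathbf{Cov}[X_k,X_l]=\frac{\sigma_k\sigma_l}{(\gamma^\ast_{c,k}-1)(\gamma^\ast_{c,l}-1)}\left({}_3F_2\left(\gamma_{c,(k,l)},1,1;\gamma^\ast_{c,k},\gamma^\ast_{c,l};1\right)-1\right). \]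
   Context: The generalized hypergeometric function is ${}_{q+1}F_q(a_1,\ldots,a_{q+1};b_1,\ldots,b_q;z)=\sum_{k=0}^\infty\frac{(a_1)_k\cdots(a_{q+1})_k}{(b_1)_k\cdots(b_q)_k}\frac{z^k}{k!}$, with $(a)_k=\Gamma(a+k)/\Gamma(a)$ the Pochhammer symbol. *)

theory Defs
  imports "HOL-Probability.Probability"
begin

definition hypergeom :: "real list \<Rightarrow> real list \<Rightarrow> real \<Rightarrow> real" where
  "hypergeom as bs z =
     (\<Sum>k. (\<Prod>a\<leftarrow>as. pochhammer a k) / (\<Prod>b\<leftarrow>bs. pochhammer b k) * z ^ k / fact k)"

definition covariance :: "'a measure \<Rightarrow> ('a \<Rightarrow> real) \<Rightarrow> ('a \<Rightarrow> real) \<Rightarrow> real" where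
  "covariance M Y Z =
     integral\<^sup>L M (\<lambda>\<omega>. (Y \<omega> - integral\<^sup>L M Y) * (Z \<omega> - integral\<^sup>L M Z))"

end

theory Submission
  imports Defs "HOL-Real_Asymp.Real_Asymp"
begin


lemma J0:
  fixes A \<sigma> :: real assumes A: "A > 1" and s: "\<sigma> > 0"
  shows "(\<integral>\<^sup>+x\<in>{0..}. ennreal ((1 + x/\<sigma>) powr (-A)) \<partial>lborel) = ennreal (\<sigma> / (A - 1))"
proof -
  define F where "F x = - \<sigma> / (A - 1) * (1 + x/\<sigma>) powr (1 - A)" for x
  have "(\<integral>\<^sup>+x\<in>{0..}. ennreal ((1 + x/\<sigma>) powr (-A)) \<partial>lborel) = ennreal (0 - F 0)"
  proof (rule nn_integral_FTC_atLeast)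
    show "(\<lambda>x. (1 + x / \<sigma>) powr - A) \<in> borel_measurable borel" by measurable
    show "(F has_real_derivative (1 + x / \<sigma>) powr - A) (at x)" if "0 \<le> x" for x
    proof -
      have p: "1 + x/\<sigma> > 0" using that s by (simp add: add_pos_nonneg)
      have "((\<lambda>x. 1 + x/\<sigma>) has_real_derivative 1/\<sigma>) (at x)"
        using s by (auto intro!: derivative_eq_intros)
      from DERIV_powr[OF this p, of "\<lambda>_. 1 - A" 0]
      have "((\<lambda>x. (1 + x/\<sigma>) powr (1 - A)) has_real_derivative
              (1 + x/\<sigma>) powr (1 - A) * (0 * ln (1 + x/\<sigma>) + (1 - A) * (1/\<sigma>) / (1 + x/\<sigma>))) (at x)"
        using p by (simp add: DERIV_const)
      hence "(F has_real_derivative - \<sigma> / (A - 1) * ((1 + x/\<sigma>) powr (1 - A) * (0 * ln (1 + x/\<sigma>) + (1 - A) * (1/\<sigma>) / (1 + x/\<sigma>)))) (at x)"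
        unfolding F_def by (rule DERIV_cmult)
      moreover have "- \<sigma> / (A - 1) * ((1 + x/\<sigma>) powr (1 - A) * (0 * ln (1 + x/\<sigma>) + (1 - A) * (1/\<sigma>) / (1 + x/\<sigma>)))
          = (1 + x/\<sigma>) powr (1 - A) / (1 + x/\<sigma>)"
      proof -
        have "\<And>P q. q \<noteq> 0 \<Longrightarrow> - \<sigma> / (A - 1) * (P * (0 * ln q + (1 - A) * (1/\<sigma>) / q)) = P / q"
          using A s by (simp add: field_simps)
        thus ?thesis using p by simp
      qed
      moreover have "(1 + x/\<sigma>) powr (1 - A) / (1 + x/\<sigma>) = (1 + x/\<sigma>) powr (-A)"
        using p by (simp add: powr_diff powr_minus_divide)
      ultimately show ?thesis by simp
    qed
    show "0 \<le> (1 + x / \<sigma>) powr - A" for x by simp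
    show "(F \<longlongrightarrow> 0) at_top"
      unfolding F_def using A s by real_asymp
  qed
  also have "0 - F 0 = \<sigma> / (A - 1)" by (simp add: F_def)
  finally show ?thesis .
qed

lemma key0: fixes A \<sigma> F P :: real assumes "A > 1" "P > 0" "\<sigma> > 0"
  shows "\<sigma> * F / ((A - 1) * P) = \<sigma> * ((real m + 1) * F) / ((A - 1) * (P * (A + real m))) + \<sigma> * F / ((A + 1 - 1) * (P * (A + real m) / A))"
proof -
  have Am: "A + real m > 0" using assms by (simp add: add_pos_nonneg)
  have "\<sigma> * F / ((A + 1 - 1) * (P * (A + real m) / A)) = \<sigma> * F / (P * (A + real m))"
    using assms by simp
  moreover have "\<sigma> * ((real m + 1) * F) / ((A - 1) * (P * (A + real m))) + \<sigma> * F / (P * (A + real m))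
     = \<sigma> * F / (P * (A + real m)) * ((real m + 1) / (A - 1) + 1)"
  proof -
    have g: "\<And>D a. D \<noteq> 0 \<Longrightarrow> a \<noteq> 0 \<Longrightarrow> \<sigma> * ((real m + 1) * F) / (a * D) + \<sigma> * F / D = \<sigma> * F / D * ((real m + 1) / a + 1)"
      by (simp add: field_simps)
    show ?thesis using g[of "P * (A + real m)" "A - 1"] assms Am by simp
  qed
  moreover have "(real m + 1) / (A - 1) + 1 = (A + real m) / (A - 1)" using assms by (simp add: field_simps)
  moreover have "\<sigma> * F / (P * (A + real m)) * ((A + real m) / (A - 1)) = \<sigma> * F / ((A - 1) * P)"
    using Am assms by simp
  ultimately show ?thesis using assms by simp
qed

definition J :: "nat \<Rightarrow> real \<Rightarrow> real \<Rightarrow> ennreal" where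
  "J m A \<sigma> = (\<integral>\<^sup>+x\<in>{0..}. ennreal ((x/\<sigma>)^m * (1 + x/\<sigma>) powr (-(A + real m))) \<partial>lborel)"

lemma J_rec:
  fixes A \<sigma> :: real assumes s: "\<sigma> > 0"
  shows "J (Suc m) A \<sigma> + J m (A + 1) \<sigma> = J m A \<sigma>"
proof -
  have "J (Suc m) A \<sigma> + J m (A + 1) \<sigma> =
     (\<integral>\<^sup>+x. ennreal ((x/\<sigma>)^Suc m * (1 + x/\<sigma>) powr (-(A + real (Suc m)))) * indicator {0..} x
       + ennreal ((x/\<sigma>)^m * (1 + x/\<sigma>) powr (-(A + 1 + real m))) * indicator {0..} x \<partial>lborel)"
    unfolding J_def by (subst nn_integral_add) auto
  also have "\<dots> = (\<integral>\<^sup>+x. ennreal ((x/\<sigma>)^m * (1 + x/\<sigma>) powr (-(A + real m))) * indicator {0..} x \<partial>lborel)"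
  proof (rule nn_integral_cong)
    fix x :: real
    show "ennreal ((x/\<sigma>)^Suc m * (1 + x/\<sigma>) powr (-(A + real (Suc m)))) * indicator {0..} x
       + ennreal ((x/\<sigma>)^m * (1 + x/\<sigma>) powr (-(A + 1 + real m))) * indicator {0..} x =
       ennreal ((x/\<sigma>)^m * (1 + x/\<sigma>) powr (-(A + real m))) * indicator {0..} x"
    proof (cases "x \<ge> 0")
      case True
      define q where "q = 1 + x/\<sigma>"
      have q: "q > 0" using True s unfolding q_def by (simp add: add_pos_nonneg)
      have e0: "q powr (-(A + real m) - 1) = q powr (-(A + real m)) / q"
        using q by (simp add: powr_diff)
      have e1: "q powr (-(A + real (Suc m))) = q powr (-(A + real m)) / q"
        using e0 by (simp add: algebra_simps)
      have e2: "q powr (-(A + 1 + real m)) = q powr (-(A + real m)) / q"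
        using e0 by (simp add: algebra_simps)
      have nn: "0 \<le> (x/\<sigma>)^m" using True s by simp
      have "(x/\<sigma>)^Suc m * q powr (-(A + real (Suc m))) + (x/\<sigma>)^m * q powr (-(A + 1 + real m))
          = (x/\<sigma>)^m * q powr (-(A + real m))"
      proof -
        have g: "y^Suc m * (Q / (1+y)) + y^m * (Q/(1+y)) = y^m * Q" if h: "1 + y \<noteq> 0" for y Q :: real
        proof -
          have "y^Suc m * (Q / (1+y)) + y^m * (Q/(1+y)) = (1+y) * (y^m * Q) / (1+y)"
            by (simp add: algebra_simps add_divide_distrib)
          also have "\<dots> = y^m * Q" using h by simp
          finally show ?thesis .
        qed
        show ?thesis unfolding e1 e2 using g[of "x/\<sigma>"] q unfolding q_def by simp
      qed
      moreover have "0 \<le> (x/\<sigma>)^Suc m * q powr (-(A + real (Suc m)))" "0 \<le> (x/\<sigma>)^m * q powr (-(A + 1 + real m))"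
        using nn True s by auto
      ultimately show ?thesis using True unfolding q_def[symmetric] by (simp add: ennreal_plus[symmetric] del: ennreal_plus)
    qed simp
  qed
  also have "\<dots> = J m A \<sigma>" unfolding J_def ..
  finally show ?thesis .
qed

lemma J_closed:
  fixes A \<sigma> :: real assumes A: "A > 1" and s: "\<sigma> > 0"
  shows "J m A \<sigma> = ennreal (\<sigma> * fact m / ((A - 1) * pochhammer A m))"
  using A
proof (induction m arbitrary: A)
  case 0
  then show ?case unfolding J_def using J0[OF 0 s] by simp
next
  case (Suc m)
  have p: "pochhammer A m > 0" using Suc.prems by (intro pochhammer_pos) simp
  have h1: "J m A \<sigma> = ennreal (\<sigma> * fact m / ((A - 1) * pochhammer A m))" using Suc by simp
  have h2: "J m (A+1) \<sigma> = ennreal (\<sigma> * fact m / ((A + 1 - 1) * pochhammer (A+1) m))" using Suc by simp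
  have pr: "pochhammer (A+1) m = pochhammer A m * (A + real m) / A"
    using pochhammer_rec[of A m] pochhammer_Suc[of A m] Suc.prems by (simp add: field_simps)
  have key: "\<sigma> * fact m / ((A - 1) * pochhammer A m) = \<sigma> * fact (Suc m) / ((A - 1) * pochhammer A (Suc m)) + \<sigma> * fact m / ((A + 1 - 1) * pochhammer (A+1) m)"
    unfolding pr pochhammer_Suc fact_Suc using key0[OF Suc.prems p s, of "fact m" m] by (simp add: algebra_simps)
  have "J (Suc m) A \<sigma> + ennreal (\<sigma> * fact m / ((A + 1 - 1) * pochhammer (A+1) m)) =
        ennreal (\<sigma> * fact (Suc m) / ((A - 1) * pochhammer A (Suc m))) + ennreal (\<sigma> * fact m / ((A + 1 - 1) * pochhammer (A+1) m))"
    using J_rec[OF s, of m A] h1 h2 key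
    apply (simp only:)
    apply (subst ennreal_plus[symmetric])
    using Suc.prems p s pochhammer_pos[of "A+1" m] pochhammer_pos[of A "Suc m"] by (auto intro!: divide_nonneg_pos mult_pos_pos)
  then show ?case by (simp add: ennreal_add_left_cancel)
qed



lemma series_expand:
  fixes u v g A B :: real
  assumes u: "u \<ge> 0" and v: "v \<ge> 0"
  shows "(\<lambda>m. pochhammer g m / fact m * (u^m * (1+u) powr (-(A + real m))) * (v^m * (1+v) powr (-(B + real m))))
           sums ((1+u) powr (-(A-g)) * (1+v) powr (-(B-g)) * (1+u+v) powr (-g))"
proof -
  define w where "w = (u * v) / ((1 + u) * (1 + v))"
  have pu: "1 + u > 0" and pv: "1 + v > 0" using u v by auto
  have w0: "w \<ge> 0" unfolding w_def using u v by simp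
  have w1: "w < 1"
  proof -
    have "u * v < (1 + u) * (1 + v)" using u v by (simp add: algebra_simps add_pos_nonneg)
    thus ?thesis unfolding w_def using pu pv by simp
  qed
  have "(\<lambda>m. ((-g) gchoose m) * (-w)^m) sums (1 + (-w)) powr (-g)"
    by (rule gen_binomial_real) (use w0 w1 in simp)
  moreover have "((-g) gchoose m) * (-w)^m = pochhammer g m / fact m * w^m" for m
  proof -
    have "((-g) gchoose m) * (-w)^m = ((-1)^m * (-1)^m) * (pochhammer g m / fact m * w^m)"
      by (simp add: gbinomial_pochhammer power_minus[of w])
    also have "(-1::real)^m * (-1)^m = 1" by (simp flip: power_add)
    finally show ?thesis by simp
  qed
  ultimately have S: "(\<lambda>m. pochhammer g m / fact m * w^m) sums (1 - w) powr (-g)" by simp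
  define K where "K = (1+u) powr (-A) * (1+v) powr (-B)"
  from sums_mult[OF S, of K]
  have S2: "(\<lambda>m. K * (pochhammer g m / fact m * w^m)) sums (K * (1 - w) powr (-g))" .
  have e1: "1 - w = (1+u+v)/((1+u)*(1+v))"
  proof -
    have nz: "(1+u)*(1+v) \<noteq> 0" using pu pv by simp
    have "1 - w = ((1 + u) * (1 + v) - u * v) / ((1 + u) * (1 + v))" unfolding w_def using nz by (simp add: diff_divide_distrib)
    also have "(1 + u) * (1 + v) - u * v = 1 + u + v" by (simp add: algebra_simps)
    finally show ?thesis .
  qed
  have E1: "K * (1 - w) powr (-g) = (1+u) powr (-(A-g)) * (1+v) powr (-(B-g)) * (1+u+v) powr (-g)"
  proof -
    have "(1 - w) powr (-g) = (1+u+v) powr (-g) * (1+u) powr g * (1+v) powr g"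
    proof -
      have "(1 - w) powr (-g) = (1+u+v) powr (-g) / ((1+u) powr (-g) * (1+v) powr (-g))"
        unfolding e1 using pu pv u v by (simp add: powr_divide powr_mult)
      also have "\<dots> = (1+u+v) powr (-g) * (1+u) powr g * (1+v) powr g"
        by (simp add: powr_minus divide_inverse)
      finally show ?thesis .
    qed
    then have "K * (1 - w) powr (-g) = ((1+u) powr (-A) * (1+u) powr g) * ((1+v) powr (-B) * (1+v) powr g) * (1+u+v) powr (-g)"
      unfolding K_def by (simp only: mult_ac)
    moreover have "(1+u) powr (-A) * (1+u) powr g = (1+u) powr (-(A-g))" by (simp add: powr_add[symmetric])
    moreover have "(1+v) powr (-B) * (1+v) powr g = (1+v) powr (-(B-g))" by (simp add: powr_add[symmetric])
    ultimately show ?thesis by simp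
  qed
  moreover have E2: "K * (pochhammer g m / fact m * w^m) =
      pochhammer g m / fact m * (u^m * (1+u) powr (-(A + real m))) * (v^m * (1+v) powr (-(B + real m)))" for m
  proof -
    have a: "(1+u) powr (-A) / (1+u)^m = (1+u) powr (-(A + real m))"
      using pu by (simp add: powr_realpow[symmetric] powr_diff[symmetric])
    have b: "(1+v) powr (-B) / (1+v)^m = (1+v) powr (-(B + real m))"
      using pv by (simp add: powr_realpow[symmetric] powr_diff[symmetric])
    have "K * (pochhammer g m / fact m * w^m) = pochhammer g m / fact m * (u^m * ((1+u) powr (-A) / (1+u)^m)) * (v^m * ((1+v) powr (-B) / (1+v)^m))"
      unfolding K_def w_def by (simp add: power_divide power_mult_distrib mult_ac)
    then show ?thesis unfolding a b .
  qed
  ultimately show ?thesis using S2 by (simp only: E1 E2)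
qed

lemma dbl_integral:
  fixes A B g \<sigma>1 \<sigma>2 :: real
  assumes s1: "\<sigma>1 > 0" and s2: "\<sigma>2 > 0" and g: "g \<ge> 0"
  shows "(\<integral>\<^sup>+s\<in>{0..}. (\<integral>\<^sup>+t\<in>{0..}. ennreal ((1+s/\<sigma>1) powr (-(A-g)) * (1+t/\<sigma>2) powr (-(B-g)) * (1+s/\<sigma>1+t/\<sigma>2) powr (-g)) \<partial>lborel) \<partial>lborel)
     = (\<Sum>m. ennreal (pochhammer g m / fact m) * J m A \<sigma>1 * J m B \<sigma>2)"
proof -
  define f where "f C \<sigma> m x = (x/\<sigma>)^m * (1 + x/\<sigma>) powr (-(C + real m))" for C \<sigma> :: real and m and x :: real
  define p where "p m = pochhammer g m / fact m" for m
  have p0: "p m \<ge> 0" for m unfolding p_def using g by (auto simp: pochhammer_prod intro!: prod_nonneg divide_nonneg_pos)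
  have f0: "x \<ge> 0 \<Longrightarrow> \<sigma> > 0 \<Longrightarrow> f C \<sigma> m x \<ge> 0" for C \<sigma> m x unfolding f_def by simp
  have fm[measurable]: "f C \<sigma> m \<in> borel_measurable borel" for C \<sigma> m unfolding f_def by measurable
  have Jf: "J m C \<sigma> = (\<integral>\<^sup>+x\<in>{0..}. ennreal (f C \<sigma> m x) \<partial>lborel)" for m C \<sigma> unfolding J_def f_def ..
  have pt: "ennreal ((1+s/\<sigma>1) powr (-(A-g)) * (1+t/\<sigma>2) powr (-(B-g)) * (1+s/\<sigma>1+t/\<sigma>2) powr (-g)) * indicator {0..} t
      = (\<Sum>m. ennreal (p m * f A \<sigma>1 m s) * ennreal (f B \<sigma>2 m t) * indicator {0..} t)" if s: "s \<ge> 0" for s t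
  proof (cases "t \<ge> 0")
    case True
    have S: "(\<lambda>m. p m * f A \<sigma>1 m s * f B \<sigma>2 m t) sums ((1+s/\<sigma>1) powr (-(A-g)) * (1+t/\<sigma>2) powr (-(B-g)) * (1+s/\<sigma>1+t/\<sigma>2) powr (-g))"
      using series_expand[of "s/\<sigma>1" "t/\<sigma>2" g A B] s True s1 s2 unfolding p_def f_def by simp
    have nn: "0 \<le> p m * f A \<sigma>1 m s * f B \<sigma>2 m t" for m using p0 f0 s True s1 s2 by simp
    have "ennreal ((1+s/\<sigma>1) powr (-(A-g)) * (1+t/\<sigma>2) powr (-(B-g)) * (1+s/\<sigma>1+t/\<sigma>2) powr (-g))
       = (\<Sum>m. ennreal (p m * f A \<sigma>1 m s * f B \<sigma>2 m t))"
      using suminf_ennreal2[OF nn sums_summable[OF S]] sums_unique[OF S] by simp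
    also have "\<dots> = (\<Sum>m. ennreal (p m * f A \<sigma>1 m s) * ennreal (f B \<sigma>2 m t))"
      using p0 f0 s True s1 s2 by (simp add: ennreal_mult)
    finally show ?thesis using True by simp
  qed simp
  have "(\<integral>\<^sup>+s\<in>{0..}. (\<integral>\<^sup>+t\<in>{0..}. ennreal ((1+s/\<sigma>1) powr (-(A-g)) * (1+t/\<sigma>2) powr (-(B-g)) * (1+s/\<sigma>1+t/\<sigma>2) powr (-g)) \<partial>lborel) \<partial>lborel)
     = (\<integral>\<^sup>+s\<in>{0..}. (\<Sum>m. ennreal (p m * f A \<sigma>1 m s) * J m B \<sigma>2) \<partial>lborel)"
  proof (rule nn_integral_cong)
    fix s :: real
    show "(\<integral>\<^sup>+t\<in>{0..}. ennreal ((1+s/\<sigma>1) powr (-(A-g)) * (1+t/\<sigma>2) powr (-(B-g)) * (1+s/\<sigma>1+t/\<sigma>2) powr (-g)) \<partial>lborel) * indicator {0..} s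
       = (\<Sum>m. ennreal (p m * f A \<sigma>1 m s) * J m B \<sigma>2) * indicator {0..} s"
    proof (cases "s \<ge> 0")
      case True
      have "(\<integral>\<^sup>+t\<in>{0..}. ennreal ((1+s/\<sigma>1) powr (-(A-g)) * (1+t/\<sigma>2) powr (-(B-g)) * (1+s/\<sigma>1+t/\<sigma>2) powr (-g)) \<partial>lborel)
          = (\<integral>\<^sup>+t. (\<Sum>m. ennreal (p m * f A \<sigma>1 m s) * ennreal (f B \<sigma>2 m t) * indicator {0..} t) \<partial>lborel)"
        using pt[OF True] by simp
      also have "\<dots> = (\<Sum>m. \<integral>\<^sup>+t. ennreal (p m * f A \<sigma>1 m s) * (ennreal (f B \<sigma>2 m t) * indicator {0..} t) \<partial>lborel)"
        by (subst nn_integral_suminf) (auto simp: mult.assoc)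
      also have "\<dots> = (\<Sum>m. ennreal (p m * f A \<sigma>1 m s) * J m B \<sigma>2)"
        by (subst nn_integral_cmult) (auto simp: Jf)
      finally show ?thesis using True by simp
    qed simp
  qed
  also have "\<dots> = (\<integral>\<^sup>+s. (\<Sum>m. ennreal (p m) * ((ennreal (f A \<sigma>1 m s) * indicator {0..} s) * J m B \<sigma>2)) \<partial>lborel)"
  proof (rule nn_integral_cong)
    fix s :: real
    show "(\<Sum>m. ennreal (p m * f A \<sigma>1 m s) * J m B \<sigma>2) * indicator {0..} s =
          (\<Sum>m. ennreal (p m) * ((ennreal (f A \<sigma>1 m s) * indicator {0..} s) * J m B \<sigma>2))"
    proof (cases "s \<ge> 0")
      case True
      then show ?thesis using p0 f0 s1 by (simp add: ennreal_mult mult_ac)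
    qed simp
  qed
  also have "\<dots> = (\<Sum>m. \<integral>\<^sup>+s. ennreal (p m) * ((ennreal (f A \<sigma>1 m s) * indicator {0..} s) * J m B \<sigma>2) \<partial>lborel)"
    by (subst nn_integral_suminf) auto
  also have "\<dots> = (\<Sum>m. ennreal (p m) * J m A \<sigma>1 * J m B \<sigma>2)"
    by (subst nn_integral_cmult, simp, subst nn_integral_multc, simp) (simp add: Jf mult.assoc)
  finally show ?thesis unfolding p_def .
qed



lemma poch_mono: fixes g A :: real assumes "0 \<le> g" "g \<le> A"
  shows "pochhammer g m \<le> pochhammer A m"
  unfolding pochhammer_prod using assms by (intro prod_mono) auto

lemma tele: fixes B :: real assumes B: "B > 2"
  shows "(\<Sum>m<N. fact m / pochhammer B m) = (B-1)/(B-2) - fact N / pochhammer B N * (B + real N - 1)/(B-2)"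
proof (induction N)
  case 0 then show ?case using B by simp
next
  case (Suc N)
  have p: "pochhammer B N > 0" using B by (intro pochhammer_pos) simp
  have BN: "B + real N > 0" using B by (simp add: add_pos_nonneg)
  have "(\<Sum>m<Suc N. fact m / pochhammer B m) = (B-1)/(B-2) - fact N / pochhammer B N * (B + real N - 1)/(B-2) + fact N / pochhammer B N"
    using Suc by simp
  also have "\<dots> = (B-1)/(B-2) - fact (Suc N) / pochhammer B (Suc N) * (B + real (Suc N) - 1)/(B-2)"
  proof -
    have g0: "\<And>F P b n :: real. P \<noteq> 0 \<Longrightarrow> b \<noteq> 0 \<Longrightarrow> b + 2 + n \<noteq> 0 \<Longrightarrow> - (F / P * (b + 2 + n - 1)/b) + F/P = - ((n + 1) * F / (P * (b + 2 + n)) * (b + 2 + (n + 1) - 1) / b)"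
    proof -
      fix F P b n :: real assume h: "P \<noteq> 0" "b \<noteq> 0" "b + 2 + n \<noteq> 0"
      have r: "(n + 1) * F / (P * (b + 2 + n)) * (b + 2 + (n + 1) - 1) / b = (n + 1) * F / (P * b)"
      proof -
        have e: "b + 2 + (n + 1) - 1 = b + 2 + n" by simp
        have "\<And>X c. c \<noteq> 0 \<Longrightarrow> X / (P * c) * c / b = X / (P * b)" using h by (simp add: field_simps)
        then show ?thesis unfolding e using h(3) by blast
      qed
      have l: "- (F / P * (b + 2 + n - 1)/b) + F/P = F / P * (1 - (b + 2 + n - 1)/b)" by (simp add: algebra_simps)
      have l2: "1 - (b + 2 + n - 1)/b = - (n + 1) / b" using h by (simp add: field_simps)
      show "- (F / P * (b + 2 + n - 1)/b) + F/P = - ((n + 1) * F / (P * (b + 2 + n)) * (b + 2 + (n + 1) - 1) / b)"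
        unfolding r l l2 using h by (simp add: field_simps)
    qed
    have g: "\<And>F P. P > 0 \<Longrightarrow> - (F / P * (B + real N - 1)/(B-2)) + F/P = - ((real N + 1) * F / (P * (B + real N)) * (B + real (Suc N) - 1) / (B-2))"
      using g0[of _ "B-2" "real N"] B BN by (simp add: algebra_simps)
    show ?thesis unfolding pochhammer_Suc fact_Suc using g[OF p, of "fact N"] by (simp add: algebra_simps)
  qed
  finally show ?case .
qed

lemma summable_h: fixes g A B :: real assumes "0 \<le> g" "g \<le> A" "B > 2" "A > 1"
  shows "summable (\<lambda>m. pochhammer g m * fact m / (pochhammer A m * pochhammer B m))"
proof (rule summable_comparison_test'[where g = "\<lambda>m. fact m / pochhammer B m"])
  have pA: "pochhammer A m > 0" for m using assms by (intro pochhammer_pos) simp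
  have pB: "pochhammer B m > 0" for m using assms by (intro pochhammer_pos) simp
  have pg: "pochhammer g m \<ge> 0" for m using assms by (auto simp: pochhammer_prod intro!: prod_nonneg)
  show "summable (\<lambda>m. fact m / pochhammer B m)"
  proof (rule summableI_nonneg_bounded[where x = "(B-1)/(B-2)"])
    show "0 \<le> fact m / pochhammer B m" for m using pB[of m] by simp
    show "(\<Sum>i<N. fact i / pochhammer B i) \<le> (B-1)/(B-2)" for N
      unfolding tele[OF assms(3)] using pB[of N] assms(3) by (simp add: add_pos_nonneg)
  qed
  show "norm (pochhammer g m * fact m / (pochhammer A m * pochhammer B m)) \<le> fact m / pochhammer B m" if "m \<ge> 0" for m
  proof -
    have "pochhammer g m / pochhammer A m \<le> 1" using poch_mono[OF assms(1,2), of m] pA[of m] by simp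
    then have "pochhammer g m / pochhammer A m * (fact m / pochhammer B m) \<le> 1 * (fact m / pochhammer B m)"
      using pB[of m] by (intro mult_right_mono) auto
    moreover have "0 \<le> pochhammer g m * fact m / (pochhammer A m * pochhammer B m)" using pg[of m] pA[of m] pB[of m] by simp
    ultimately show ?thesis by (simp add: field_simps)
  qed
qed

lemma sum_closed:
  fixes A B g \<sigma>1 \<sigma>2 :: real
  assumes A: "A > 1" and B: "B > 2" and g: "0 \<le> g" "g \<le> A" and s1: "\<sigma>1 > 0" and s2: "\<sigma>2 > 0"
  shows "(\<Sum>m. ennreal (pochhammer g m / fact m) * J m A \<sigma>1 * J m B \<sigma>2)
     = ennreal (\<sigma>1 * \<sigma>2 / ((A - 1) * (B - 1)) * (\<Sum>m. pochhammer g m * fact m / (pochhammer A m * pochhammer B m)))"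
proof -
  define h where "h m = pochhammer g m * fact m / (pochhammer A m * pochhammer B m)" for m
  define C where "C = \<sigma>1 * \<sigma>2 / ((A - 1) * (B - 1))"
  have pA: "pochhammer A m > 0" for m using A by (intro pochhammer_pos) simp
  have pB: "pochhammer B m > 0" for m using B by (intro pochhammer_pos) simp
  have pg: "pochhammer g m \<ge> 0" for m using g by (auto simp: pochhammer_prod intro!: prod_nonneg)
  have C0: "C \<ge> 0" unfolding C_def using A B s1 s2 by simp
  have h0: "h m \<ge> 0" for m unfolding h_def using pA[of m] pB[of m] pg[of m] by simp
  have tm: "ennreal (pochhammer g m / fact m) * J m A \<sigma>1 * J m B \<sigma>2 = ennreal (C * h m)" for m
  proof -
    have "ennreal (pochhammer g m / fact m) * J m A \<sigma>1 * J m B \<sigma>2 =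
      ennreal (pochhammer g m / fact m * (\<sigma>1 * fact m / ((A - 1) * pochhammer A m)) * (\<sigma>2 * fact m / ((B - 1) * pochhammer B m)))"
    proof -
      define x where "x = pochhammer g m / fact m"
      define y where "y = \<sigma>1 * fact m / ((A - 1) * pochhammer A m)"
      define z where "z = \<sigma>2 * fact m / ((B - 1) * pochhammer B m)"
      have x: "x \<ge> 0" unfolding x_def using pg[of m] by simp
      have y: "y \<ge> 0" unfolding y_def using pA[of m] A s1 by simp
      have z: "z \<ge> 0" unfolding z_def using pB[of m] B s2 by simp
      have "ennreal (x*y*z) = ennreal (x*y) * ennreal z" using x y z by (intro ennreal_mult) auto
      also have "ennreal (x*y) = ennreal x * ennreal y" using x y by (intro ennreal_mult) auto
      finally have "ennreal x * ennreal y * ennreal z = ennreal (x*y*z)" ..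
      moreover have "J m A \<sigma>1 = ennreal y" unfolding y_def using J_closed[OF A s1, of m] .
      moreover have "J m B \<sigma>2 = ennreal z" unfolding z_def using J_closed[of B \<sigma>2 m] B s2 by simp
      ultimately show ?thesis unfolding x_def y_def z_def by simp
    qed
    also have "pochhammer g m / fact m * (\<sigma>1 * fact m / ((A - 1) * pochhammer A m)) * (\<sigma>2 * fact m / ((B - 1) * pochhammer B m)) = C * h m"
      unfolding C_def h_def by (simp add: field_simps)
    finally show ?thesis .
  qed
  have sh: "summable h" unfolding h_def by (rule summable_h[OF g B A])
  have "(\<Sum>m. ennreal (pochhammer g m / fact m) * J m A \<sigma>1 * J m B \<sigma>2) = (\<Sum>m. ennreal (C * h m))"
    by (simp add: tm)
  also have "\<dots> = ennreal (\<Sum>m. C * h m)"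
    by (rule suminf_ennreal2) (use C0 h0 sh in \<open>auto intro: summable_mult\<close>)
  also have "(\<Sum>m. C * h m) = C * (\<Sum>m. h m)" by (rule suminf_mult[OF sh])
  finally show ?thesis unfolding C_def h_def .
qed



lemma tail1:
  fixes Y :: "'a \<Rightarrow> real"
  assumes M: "prob_space M" and Y[measurable]: "Y \<in> borel_measurable M"
    and nn: "AE \<omega> in M. Y \<omega> \<ge> 0"
  shows "(\<integral>\<^sup>+\<omega>. ennreal (Y \<omega>) \<partial>M) = (\<integral>\<^sup>+s\<in>{0..}. emeasure M {\<omega>\<in>space M. Y \<omega> > s} \<partial>lborel)"
proof -
  interpret prob_space M by fact
  interpret P: pair_sigma_finite M lborel by unfold_locales
  define G where "G \<omega> s = (if 0 \<le> s \<and> s < Y \<omega> then 1 else 0 :: ennreal)" for \<omega> s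
  have Gm[measurable]: "case_prod G \<in> borel_measurable (M \<Otimes>\<^sub>M lborel)" unfolding G_def by measurable
  have "(\<integral>\<^sup>+\<omega>. ennreal (Y \<omega>) \<partial>M) = (\<integral>\<^sup>+\<omega>. (\<integral>\<^sup>+s. G \<omega> s \<partial>lborel) \<partial>M)"
  proof (rule nn_integral_cong_AE)
    show "AE \<omega> in M. ennreal (Y \<omega>) = (\<integral>\<^sup>+s. G \<omega> s \<partial>lborel)"
    using nn proof eventually_elim
      case (elim \<omega>)
      have "(\<integral>\<^sup>+s. G \<omega> s \<partial>lborel) = (\<integral>\<^sup>+s. indicator {0..<Y \<omega>} s \<partial>lborel)"
        unfolding G_def by (intro nn_integral_cong) (auto simp: indicator_def)
      also have "\<dots> = ennreal (Y \<omega>)" using elim by simp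
      finally show ?case ..
    qed
  qed
  also have "\<dots> = (\<integral>\<^sup>+s. (\<integral>\<^sup>+\<omega>. G \<omega> s \<partial>M) \<partial>lborel)"
    using P.Fubini'[OF Gm] by simp
  also have "\<dots> = (\<integral>\<^sup>+s\<in>{0..}. emeasure M {\<omega>\<in>space M. Y \<omega> > s} \<partial>lborel)"
  proof (rule nn_integral_cong)
    fix s :: real
    have "(\<integral>\<^sup>+\<omega>. G \<omega> s \<partial>M) = (\<integral>\<^sup>+\<omega>. indicator {\<omega>\<in>space M. Y \<omega> > s} \<omega> * indicator {0..} s \<partial>M)"
      unfolding G_def by (intro nn_integral_cong) (auto simp: indicator_def)
    also have "\<dots> = emeasure M {\<omega>\<in>space M. Y \<omega> > s} * indicator {0..} s"
      by (subst nn_integral_multc) auto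
    finally show "(\<integral>\<^sup>+\<omega>. G \<omega> s \<partial>M) = emeasure M {\<omega>\<in>space M. Y \<omega> > s} * indicator {0..} s" .
  qed
  finally show ?thesis .
qed

lemma tail2:
  fixes Y Z :: "'a \<Rightarrow> real"
  assumes M: "prob_space M" and Y[measurable]: "Y \<in> borel_measurable M" and Z[measurable]: "Z \<in> borel_measurable M"
    and nn: "AE \<omega> in M. Y \<omega> \<ge> 0 \<and> Z \<omega> \<ge> 0"
  shows "(\<integral>\<^sup>+\<omega>. ennreal (Y \<omega> * Z \<omega>) \<partial>M) =
    (\<integral>\<^sup>+s\<in>{0..}. (\<integral>\<^sup>+t\<in>{0..}. emeasure M {\<omega>\<in>space M. Y \<omega> > s \<and> Z \<omega> > t} \<partial>lborel) \<partial>lborel)"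
proof -
  interpret prob_space M by fact
  interpret P: pair_sigma_finite M lborel by unfold_locales
  define G where "G \<omega> s t = (if 0 \<le> s \<and> s < Y \<omega> \<and> 0 \<le> t \<and> t < Z \<omega> then 1 else 0 :: ennreal)" for \<omega> s t
  have Gm: "(\<lambda>(\<omega>, t). G \<omega> s t) \<in> borel_measurable (M \<Otimes>\<^sub>M lborel)" for s unfolding G_def by measurable
  have Gm2: "(\<lambda>(\<omega>, s). \<integral>\<^sup>+t. G \<omega> s t \<partial>lborel) \<in> borel_measurable (M \<Otimes>\<^sub>M lborel)"
  proof -
    have "(\<lambda>(x, t). G (fst x) (snd x) t) \<in> borel_measurable ((M \<Otimes>\<^sub>M lborel) \<Otimes>\<^sub>M lborel)"
      unfolding G_def by measurable
    then have "(\<lambda>x. \<integral>\<^sup>+t. G (fst x) (snd x) t \<partial>lborel) \<in> borel_measurable (M \<Otimes>\<^sub>M lborel)"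
      by (rule lborel.borel_measurable_nn_integral)
    then show ?thesis by (simp add: case_prod_beta')
  qed
  have "(\<integral>\<^sup>+\<omega>. ennreal (Y \<omega> * Z \<omega>) \<partial>M) = (\<integral>\<^sup>+\<omega>. (\<integral>\<^sup>+s. (\<integral>\<^sup>+t. G \<omega> s t \<partial>lborel) \<partial>lborel) \<partial>M)"
  proof (rule nn_integral_cong_AE)
    show "AE \<omega> in M. ennreal (Y \<omega> * Z \<omega>) = (\<integral>\<^sup>+s. (\<integral>\<^sup>+t. G \<omega> s t \<partial>lborel) \<partial>lborel)"
    using nn proof eventually_elim
      case (elim \<omega>)
      have "(\<integral>\<^sup>+s. (\<integral>\<^sup>+t. G \<omega> s t \<partial>lborel) \<partial>lborel) = (\<integral>\<^sup>+s. (\<integral>\<^sup>+t. indicator {0..<Y \<omega>} s * indicator {0..<Z \<omega>} t \<partial>lborel) \<partial>lborel)"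
        unfolding G_def by (intro nn_integral_cong) (auto simp: indicator_def)
      also have "\<dots> = (\<integral>\<^sup>+s. indicator {0..<Y \<omega>} s * ennreal (Z \<omega>) \<partial>lborel)"
        using elim by (intro nn_integral_cong) (simp add: nn_integral_cmult)
      also have "\<dots> = ennreal (Y \<omega>) * ennreal (Z \<omega>)"
        using elim by (simp add: nn_integral_multc)
      also have "\<dots> = ennreal (Y \<omega> * Z \<omega>)" using elim by (simp add: ennreal_mult)
      finally show ?case ..
    qed
  qed
  also have "\<dots> = (\<integral>\<^sup>+s. (\<integral>\<^sup>+\<omega>. (\<integral>\<^sup>+t. G \<omega> s t \<partial>lborel) \<partial>M) \<partial>lborel)"
    using P.Fubini'[OF Gm2] by simp
  also have "\<dots> = (\<integral>\<^sup>+s. (\<integral>\<^sup>+t. (\<integral>\<^sup>+\<omega>. G \<omega> s t \<partial>M) \<partial>lborel) \<partial>lborel)"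
    using P.Fubini'[OF Gm] by simp
  also have "\<dots> = (\<integral>\<^sup>+s\<in>{0..}. (\<integral>\<^sup>+t\<in>{0..}. emeasure M {\<omega>\<in>space M. Y \<omega> > s \<and> Z \<omega> > t} \<partial>lborel) \<partial>lborel)"
  proof (rule nn_integral_cong)
    fix s :: real
    have "(\<integral>\<^sup>+t. (\<integral>\<^sup>+\<omega>. G \<omega> s t \<partial>M) \<partial>lborel) = (\<integral>\<^sup>+t. (emeasure M {\<omega>\<in>space M. Y \<omega> > s \<and> Z \<omega> > t} * indicator {0..} t) * indicator {0..} s \<partial>lborel)"
    proof (rule nn_integral_cong)
      fix t :: real
      have "(\<integral>\<^sup>+\<omega>. G \<omega> s t \<partial>M) = (\<integral>\<^sup>+\<omega>. indicator {\<omega>\<in>space M. Y \<omega> > s \<and> Z \<omega> > t} \<omega> * (indicator {0..} t * indicator {0..} s) \<partial>M)"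
        unfolding G_def by (intro nn_integral_cong) (auto simp: indicator_def)
      also have "\<dots> = emeasure M {\<omega>\<in>space M. Y \<omega> > s \<and> Z \<omega> > t} * indicator {0..} t * indicator {0..} s"
        by (subst nn_integral_multc) (auto simp: mult.assoc)
      finally show "(\<integral>\<^sup>+\<omega>. G \<omega> s t \<partial>M) = (emeasure M {\<omega>\<in>space M. Y \<omega> > s \<and> Z \<omega> > t} * indicator {0..} t) * indicator {0..} s" .
    qed
    also have "\<dots> = (\<integral>\<^sup>+t\<in>{0..}. emeasure M {\<omega>\<in>space M. Y \<omega> > s \<and> Z \<omega> > t} \<partial>lborel) * indicator {0..} s"
      by (subst nn_integral_multc) auto
    finally show "(\<integral>\<^sup>+t. (\<integral>\<^sup>+\<omega>. G \<omega> s t \<partial>M) \<partial>lborel) = (\<integral>\<^sup>+t\<in>{0..}. emeasure M {\<omega>\<in>space M. Y \<omega> > s \<and> Z \<omega> > t} \<partial>lborel) * indicator {0..} s" .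
  qed
  finally show ?thesis .
qed



lemma surv_general:
  fixes M :: "'a measure" and X :: "nat \<Rightarrow> 'a \<Rightarrow> real"
    and n :: nat and c :: "nat \<Rightarrow> nat \<Rightarrow> real" and \<sigma> \<gamma> :: "nat \<Rightarrow> real" and x :: "nat \<Rightarrow> real"
  assumes P: "prob_space M"
    and n: "n \<ge> 2"
    and cc: "\<forall>i\<in>{1..n}. \<forall>j\<in>{1..n+1}. c i j \<in> {0, 1}"
    and sg: "\<forall>i\<in>{1..n}. \<sigma> i > 0"
    and meas: "\<forall>i\<in>{1..n}. X i \<in> borel_measurable M"
    and H: "\<forall>x :: nat \<Rightarrow> real. (\<forall>i\<in>{1..n}. x i > 0) \<longrightarrow>
           measure M {\<omega> \<in> space M. \<forall>i\<in>{1..n}. X i \<omega> > x i}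
           = (\<Prod>j=1..n+1. (1 + (\<Sum>i=1..n. c i j / \<sigma> i * x i)) powr (- \<gamma> j))"
    and x: "\<forall>i\<in>{1..n}. x i \<ge> 0"
  shows "measure M {\<omega> \<in> space M. \<forall>i\<in>{1..n}. X i \<omega> > x i}
           = (\<Prod>j=1..n+1. (1 + (\<Sum>i=1..n. c i j / \<sigma> i * x i)) powr (- \<gamma> j))"
proof -
  interpret prob_space M by fact
  define xs where "xs m i = x i + inverse (real (Suc m))" for m i
  define S where "S m = {\<omega> \<in> space M. \<forall>i\<in>{1..n}. X i \<omega> > xs m i}" for m
  define F where "F y = (\<Prod>j=1..n+1. (1 + (\<Sum>i=1..n. c i j / \<sigma> i * y i)) powr (- \<gamma> j))" for y
  have Xm[measurable]: "X i \<in> borel_measurable M" if "i \<in> {1..n}" for i using meas that by auto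
  have Sm: "S m \<in> sets M" for m unfolding S_def by measurable
  have Sinc: "incseq S"
  proof (rule incseq_SucI)
    fix m
    have "xs (Suc m) i \<le> xs m i" for i unfolding xs_def by (simp add: field_simps)
    then show "S m \<subseteq> S (Suc m)" unfolding S_def by (auto intro: le_less_trans)
  qed
  have SU: "(\<Union>m. S m) = {\<omega> \<in> space M. \<forall>i\<in>{1..n}. X i \<omega> > x i}"
  proof
    show "(\<Union>m. S m) \<subseteq> {\<omega> \<in> space M. \<forall>i\<in>{1..n}. X i \<omega> > x i}"
      unfolding S_def xs_def by (auto intro: less_trans[rotated] simp: add_pos_pos)
    show "{\<omega> \<in> space M. \<forall>i\<in>{1..n}. X i \<omega> > x i} \<subseteq> (\<Union>m. S m)"
    proof
      fix \<omega> assume w: "\<omega> \<in> {\<omega> \<in> space M. \<forall>i\<in>{1..n}. X i \<omega> > x i}"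
      define d where "d = Min ((\<lambda>i. X i \<omega> - x i) ` {1..n})"
      have "d > 0" unfolding d_def using w n by (subst Min_gr_iff) auto
      then obtain m where m: "inverse (real (Suc m)) < d" using reals_Archimedean by blast
      have "\<forall>i\<in>{1..n}. X i \<omega> > xs m i"
      proof
        fix i assume i: "i \<in> {1..n}"
        have "d \<le> X i \<omega> - x i" unfolding d_def using i by (intro Min_le) auto
        then show "X i \<omega> > xs m i" unfolding xs_def using m by simp
      qed
      then show "\<omega> \<in> (\<Union>m. S m)" using w unfolding S_def by auto
    qed
  qed
  have L1: "(\<lambda>m. measure M (S m)) \<longlonglongrightarrow> measure M {\<omega> \<in> space M. \<forall>i\<in>{1..n}. X i \<omega> > x i}"
    using finite_Lim_measure_incseq[of S] Sm Sinc SU by auto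
  have e: "measure M (S m) = F (xs m)" for m
  proof -
    have "\<forall>i\<in>{1..n}. xs m i > 0" using x unfolding xs_def by (simp add: add_nonneg_pos)
    then show ?thesis using H unfolding S_def F_def by blast
  qed
  have pos: "1 + (\<Sum>i=1..n. c i j / \<sigma> i * x i) > 0" if "j \<in> {1..n+1}" for j
  proof -
    have "(\<Sum>i=1..n. c i j / \<sigma> i * x i) \<ge> 0"
    proof (rule sum_nonneg)
      fix i assume i: "i \<in> {1..n}"
      have "c i j \<in> {0, 1}" using cc i that by blast
      then have "c i j \<ge> 0" by auto
      moreover have "\<sigma> i > 0" "x i \<ge> 0" using sg x i by auto
      ultimately show "c i j / \<sigma> i * x i \<ge> 0" by simp
    qed
    then show ?thesis by simp
  qed
  have xl: "(\<lambda>m. x i + inverse (real (Suc m))) \<longlonglongrightarrow> x i" for i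
    using tendsto_add[OF tendsto_const LIMSEQ_inverse_real_of_nat, of "x i"] by simp
  have L2: "(\<lambda>m. F (xs m)) \<longlonglongrightarrow> F x"
    unfolding F_def xs_def
  proof (intro tendsto_prod tendsto_powr tendsto_add tendsto_const tendsto_sum tendsto_mult)
  qed (rule xl | metis pos less_irrefl)+
  have "(\<lambda>m. measure M (S m)) \<longlonglongrightarrow> F x" using L2 by (simp add: e)
  with L1 show ?thesis unfolding F_def using LIMSEQ_unique by blast
qed



lemma factor_j:
  fixes a b u v \<gamma> :: real
  assumes "a \<in> {0,1}" "b \<in> {0,1}" "u \<ge> 0" "v \<ge> 0"
  shows "(1 + a*u + b* v) powr (-\<gamma>) = (1+u) powr (-(a*\<gamma> - a*b*\<gamma>)) * (1+v) powr (-(b*\<gamma> - a*b*\<gamma>)) * (1+u+v) powr (-(a*b*\<gamma>))"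
  using assms by (auto simp: add_pos_nonneg)

lemma prod_factor:
  fixes a b \<gamma> :: "nat \<Rightarrow> real" and u v :: real
  assumes "finite JJ" "\<forall>j\<in>JJ. a j \<in> {0,1}" "\<forall>j\<in>JJ. b j \<in> {0,1}" "u \<ge> 0" "v \<ge> 0"
  shows "(\<Prod>j\<in>JJ. (1 + a j*u + b j* v) powr (-\<gamma> j)) =
    (1+u) powr (-((\<Sum>j\<in>JJ. a j * \<gamma> j) - (\<Sum>j\<in>JJ. a j * b j * \<gamma> j))) *
    (1+v) powr (-((\<Sum>j\<in>JJ. b j * \<gamma> j) - (\<Sum>j\<in>JJ. a j * b j * \<gamma> j))) *
    (1+u+v) powr (-(\<Sum>j\<in>JJ. a j * b j * \<gamma> j))"
proof -
  have u1: "1 + u \<noteq> 0" "1 + v \<noteq> 0" "1 + u + v \<noteq> 0" using assms by auto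
  have "(\<Prod>j\<in>JJ. (1 + a j*u + b j* v) powr (-\<gamma> j)) = (\<Prod>j\<in>JJ. (1+u) powr (-(a j*\<gamma> j - a j*b j*\<gamma> j)) * (1+v) powr (-(b j*\<gamma> j - a j*b j*\<gamma> j)) * (1+u+v) powr (-(a j*b j*\<gamma> j)))"
    using assms by (intro prod.cong refl factor_j) auto
  also have "\<dots> = (\<Prod>j\<in>JJ. (1+u) powr (-(a j*\<gamma> j - a j*b j*\<gamma> j))) * (\<Prod>j\<in>JJ. (1+v) powr (-(b j*\<gamma> j - a j*b j*\<gamma> j))) * (\<Prod>j\<in>JJ. (1+u+v) powr (-(a j*b j*\<gamma> j)))"
    by (simp add: prod.distrib)
  also have "\<dots> = (1+u) powr (\<Sum>j\<in>JJ. -(a j*\<gamma> j - a j*b j*\<gamma> j)) * (1+v) powr (\<Sum>j\<in>JJ. -(b j*\<gamma> j - a j*b j*\<gamma> j)) * (1+u+v) powr (\<Sum>j\<in>JJ. -(a j*b j*\<gamma> j))"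
    using u1 by (simp add: powr_sum)
  also have "\<dots> = (1+u) powr (-((\<Sum>j\<in>JJ. a j * \<gamma> j) - (\<Sum>j\<in>JJ. a j * b j * \<gamma> j))) *
    (1+v) powr (-((\<Sum>j\<in>JJ. b j * \<gamma> j) - (\<Sum>j\<in>JJ. a j * b j * \<gamma> j))) *
    (1+u+v) powr (-(\<Sum>j\<in>JJ. a j * b j * \<gamma> j))"
    by (simp add: sum_negf sum_subtractf)
  finally show ?thesis .
qed



theorem theorem3p1:
  fixes M :: "'a measure" and X :: "nat \<Rightarrow> 'a \<Rightarrow> real"
    and n :: nat and c :: "nat \<Rightarrow> nat \<Rightarrow> real"
    and \<sigma> \<gamma> :: "nat \<Rightarrow> real" and k l :: nat
  assumes "prob_space M"
    and "n \<ge> 2"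
    and "\<forall>i\<in>{1..n}. \<forall>j\<in>{1..n+1}. c i j \<in> {0, 1}"
    and "\<forall>i\<in>{1..n}. \<sigma> i > 0"
    and "\<forall>j\<in>{1..n+1}. \<gamma> j > 0"
    and "\<forall>i\<in>{1..n}. X i \<in> borel_measurable M"
    and "\<forall>x :: nat \<Rightarrow> real. (\<forall>i\<in>{1..n}. x i > 0) \<longrightarrow>
           measure M {\<omega> \<in> space M. \<forall>i\<in>{1..n}. X i \<omega> > x i}
           = (\<Prod>j=1..n+1. (1 + (\<Sum>i=1..n. c i j / \<sigma> i * x i)) powr (- \<gamma> j))"
    and "k \<in> {1..n}" and "l \<in> {1..n}" and "k \<noteq> l"
    and "(\<Sum>j=1..n+1. c k j * \<gamma> j) > 2"
    and "(\<Sum>j=1..n+1. c l j * \<gamma> j) > 2"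
  shows "covariance M (X k) (X l) =
           \<sigma> k * \<sigma> l
           / (((\<Sum>j=1..n+1. c k j * \<gamma> j) - 1) * ((\<Sum>j=1..n+1. c l j * \<gamma> j) - 1))
           * (hypergeom [\<Sum>j=1..n+1. c k j * c l j * \<gamma> j, 1, 1]
                        [\<Sum>j=1..n+1. c k j * \<gamma> j, \<Sum>j=1..n+1. c l j * \<gamma> j] 1 - 1)"
proof -
  note P = assms(1) and cc = assms(3) and sg = assms(4) and gp = assms(5) and meas = assms(6) and H = assms(7)
  note k = assms(8) and l = assms(9) and kl = assms(10)
  interpret prob_space M by fact
  define A where "A = (\<Sum>j=1..n+1. c k j * \<gamma> j)"
  define B where "B = (\<Sum>j=1..n+1. c l j * \<gamma> j)"
  define g where "g = (\<Sum>j=1..n+1. c k j * c l j * \<gamma> j)"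
  have A2: "A > 2" and B2: "B > 2" using assms(11,12) unfolding A_def B_def by auto
  have A1: "A > 1" and B1: "B > 1" using A2 B2 by auto
  have Xi[measurable]: "X i \<in> borel_measurable M" if "i \<in> {1..n}" for i using meas that by auto
  have Xk[measurable]: "X k \<in> borel_measurable M" and Xl[measurable]: "X l \<in> borel_measurable M"
    using meas k l by auto
  have sk: "\<sigma> k > 0" and sl: "\<sigma> l > 0" using sg k l by auto
  have ck: "\<forall>j\<in>{1..n+1}. c k j \<in> {0,1}" and cl: "\<forall>j\<in>{1..n+1}. c l j \<in> {0,1}" using cc k l by auto
  have g0: "0 \<le> g" unfolding g_def
  proof (rule sum_nonneg)
    fix j assume j: "j \<in> {1..n+1}"
    have "c k j \<in> {0,1}" "c l j \<in> {0,1}" "\<gamma> j > 0" using ck cl gp j by auto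
    then show "0 \<le> c k j * c l j * \<gamma> j" by auto
  qed
  have gA: "g \<le> A" unfolding g_def A_def
  proof (rule sum_mono)
    fix j assume j: "j \<in> {1..n+1}"
    have "c k j \<in> {0,1}" "c l j \<in> {0,1}" "\<gamma> j > 0" using ck cl gp j by auto
    then show "c k j * c l j * \<gamma> j \<le> c k j * \<gamma> j" by auto
  qed
  have S0: "{\<omega> \<in> space M. \<forall>i\<in>{1..n}. X i \<omega> > 0} \<in> sets M" by measurable
  have "measure M {\<omega> \<in> space M. \<forall>i\<in>{1..n}. X i \<omega> > (\<lambda>_. 0) i} = 1"
    using surv_general[OF P assms(2) cc sg meas H, of "\<lambda>_. 0"] by simp
  then have "AE \<omega> in M. \<omega> \<in> {\<omega> \<in> space M. \<forall>i\<in>{1..n}. X i \<omega> > 0}"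
    using prob_eq_1[OF S0] by simp
  then have AE0: "AE \<omega> in M. \<forall>i\<in>{1..n}. X i \<omega> > 0"
    by eventually_elim auto
  have biv: "measure M {\<omega> \<in> space M. X k \<omega> > s \<and> X l \<omega> > t} =
      (1 + s/\<sigma> k) powr (-(A-g)) * (1 + t/\<sigma> l) powr (-(B-g)) * (1 + s/\<sigma> k + t/\<sigma> l) powr (-g)"
    if s: "s \<ge> 0" and t: "t \<ge> 0" for s t
  proof -
    define x where "x i = (if i = k then s else if i = l then t else 0)" for i
    have x0: "\<forall>i\<in>{1..n}. x i \<ge> 0" using s t unfolding x_def by auto
    have "measure M {\<omega> \<in> space M. X k \<omega> > s \<and> X l \<omega> > t} = measure M {\<omega> \<in> space M. \<forall>i\<in>{1..n}. X i \<omega> > x i}"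
    proof (rule measure_eq_AE)
      show "AE \<omega> in M. (\<omega> \<in> {\<omega> \<in> space M. X k \<omega> > s \<and> X l \<omega> > t}) = (\<omega> \<in> {\<omega> \<in> space M. \<forall>i\<in>{1..n}. X i \<omega> > x i})"
        using AE0 AE_space
      proof eventually_elim
        case (elim \<omega>)
        show ?case
        proof
          assume "\<omega> \<in> {\<omega> \<in> space M. X k \<omega> > s \<and> X l \<omega> > t}"
          then show "\<omega> \<in> {\<omega> \<in> space M. \<forall>i\<in>{1..n}. X i \<omega> > x i}" using elim unfolding x_def by auto
        next
          assume "\<omega> \<in> {\<omega> \<in> space M. \<forall>i\<in>{1..n}. X i \<omega> > x i}"
          then show "\<omega> \<in> {\<omega> \<in> space M. X k \<omega> > s \<and> X l \<omega> > t}" using k l kl unfolding x_def by force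
        qed
      qed
    qed measurable
    also have "\<dots> = (\<Prod>j=1..n+1. (1 + (\<Sum>i=1..n. c i j / \<sigma> i * x i)) powr (- \<gamma> j))"
      by (rule surv_general[OF P assms(2) cc sg meas H x0])
    also have "\<dots> = (\<Prod>j=1..n+1. (1 + c k j * (s/\<sigma> k) + c l j * (t/\<sigma> l)) powr (- \<gamma> j))"
    proof (rule prod.cong[OF refl])
      fix j
      have "c i j / \<sigma> i * x i = (if i = k then c k j * (s/\<sigma> k) else 0) + (if i = l then c l j * (t/\<sigma> l) else 0)" for i
        using kl unfolding x_def by auto
      then have "(\<Sum>i=1..n. c i j / \<sigma> i * x i) = (\<Sum>i=1..n. (if i = k then c k j * (s/\<sigma> k) else 0)) + (\<Sum>i=1..n. (if i = l then c l j * (t/\<sigma> l) else 0))"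
        by (simp add: sum.distrib)
      also have "\<dots> = c k j * (s/\<sigma> k) + c l j * (t/\<sigma> l)" using k l by simp
      finally show "(1 + (\<Sum>i=1..n. c i j / \<sigma> i * x i)) powr (- \<gamma> j) = (1 + c k j * (s/\<sigma> k) + c l j * (t/\<sigma> l)) powr (- \<gamma> j)"
        by (simp add: add.assoc)
    qed
    also have "\<dots> = (1 + s/\<sigma> k) powr (-(A-g)) * (1 + t/\<sigma> l) powr (-(B-g)) * (1 + s/\<sigma> k + t/\<sigma> l) powr (-g)"
      unfolding A_def B_def g_def
      by (rule prod_factor) (use ck cl s t sk sl in auto)
    finally show ?thesis .
  qed
  have ukey: "measure M {\<omega> \<in> space M. X k \<omega> > s} = (1 + s/\<sigma> k) powr (-A)" if s: "s \<ge> 0" for s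
  proof -
    have "measure M {\<omega> \<in> space M. X k \<omega> > s} = measure M {\<omega> \<in> space M. X k \<omega> > s \<and> X l \<omega> > 0}"
      by (rule measure_eq_AE) (use AE0 l in \<open>auto elim!: eventually_mono\<close>)
    also have "\<dots> = (1 + s/\<sigma> k) powr (-(A-g)) * (1 + s/\<sigma> k) powr (-g)"
      using biv[OF s order_refl] by simp
    also have "\<dots> = (1 + s/\<sigma> k) powr (-A)" by (simp add: powr_add[symmetric])
    finally show ?thesis .
  qed
  have ukey2: "measure M {\<omega> \<in> space M. X l \<omega> > t} = (1 + t/\<sigma> l) powr (-B)" if t: "t \<ge> 0" for t
  proof -
    have "measure M {\<omega> \<in> space M. X l \<omega> > t} = measure M {\<omega> \<in> space M. X k \<omega> > 0 \<and> X l \<omega> > t}"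
      by (rule measure_eq_AE) (use AE0 k in \<open>auto elim!: eventually_mono\<close>)
    also have "\<dots> = (1 + t/\<sigma> l) powr (-(B-g)) * (1 + t/\<sigma> l) powr (-g)"
      using biv[OF order_refl t] by simp
    also have "\<dots> = (1 + t/\<sigma> l) powr (-B)" by (simp add: powr_add[symmetric])
    finally show ?thesis .
  qed
  have AEi: "AE \<omega> in M. X i \<omega> > 0" if "i \<in> {1..n}" for i using AE0 by eventually_elim (use that in blast)
  have AEk: "AE \<omega> in M. X k \<omega> \<ge> 0" using AEi[OF k] by eventually_elim simp
  have AEl: "AE \<omega> in M. X l \<omega> \<ge> 0" using AEi[OF l] by eventually_elim simp
  have AEkl: "AE \<omega> in M. X k \<omega> \<ge> 0 \<and> X l \<omega> \<ge> 0" using AEi[OF k] AEi[OF l] by eventually_elim simp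
  have AEp: "AE \<omega> in M. 0 \<le> X k \<omega> * X l \<omega>" using AEkl by eventually_elim simp
  have Ek: "(\<integral>\<^sup>+\<omega>. ennreal (X k \<omega>) \<partial>M) = ennreal (\<sigma> k / (A - 1))"
  proof -
    have "(\<integral>\<^sup>+\<omega>. ennreal (X k \<omega>) \<partial>M) = (\<integral>\<^sup>+s\<in>{0..}. emeasure M {\<omega>\<in>space M. X k \<omega> > s} \<partial>lborel)"
      by (rule tail1[OF P Xk AEk])
    also have "\<dots> = (\<integral>\<^sup>+s\<in>{0..}. ennreal ((1 + s/\<sigma> k) powr (-A)) \<partial>lborel)"
      by (intro nn_integral_cong) (auto simp: indicator_def emeasure_eq_measure ukey)
    also have "\<dots> = ennreal (\<sigma> k / (A - 1))" by (rule J0[OF A1 sk])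
    finally show ?thesis .
  qed
  have El: "(\<integral>\<^sup>+\<omega>. ennreal (X l \<omega>) \<partial>M) = ennreal (\<sigma> l / (B - 1))"
  proof -
    have "(\<integral>\<^sup>+\<omega>. ennreal (X l \<omega>) \<partial>M) = (\<integral>\<^sup>+s\<in>{0..}. emeasure M {\<omega>\<in>space M. X l \<omega> > s} \<partial>lborel)"
      by (rule tail1[OF P Xl AEl])
    also have "\<dots> = (\<integral>\<^sup>+s\<in>{0..}. ennreal ((1 + s/\<sigma> l) powr (-B)) \<partial>lborel)"
      by (intro nn_integral_cong) (auto simp: indicator_def emeasure_eq_measure ukey2)
    also have "\<dots> = ennreal (\<sigma> l / (B - 1))" by (rule J0[OF B1 sl])
    finally show ?thesis .
  qed
  define Hs where "Hs = (\<Sum>m. pochhammer g m * fact m / (pochhammer A m * pochhammer B m))"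
  define C where "C = \<sigma> k * \<sigma> l / ((A - 1) * (B - 1))"
  have Ekl: "(\<integral>\<^sup>+\<omega>. ennreal (X k \<omega> * X l \<omega>) \<partial>M) = ennreal (C * Hs)"
  proof -
    have "(\<integral>\<^sup>+\<omega>. ennreal (X k \<omega> * X l \<omega>) \<partial>M) =
      (\<integral>\<^sup>+s\<in>{0..}. (\<integral>\<^sup>+t\<in>{0..}. emeasure M {\<omega>\<in>space M. X k \<omega> > s \<and> X l \<omega> > t} \<partial>lborel) \<partial>lborel)"
      by (rule tail2[OF P Xk Xl AEkl])
    also have "\<dots> = (\<integral>\<^sup>+s\<in>{0..}. (\<integral>\<^sup>+t\<in>{0..}. ennreal ((1 + s/\<sigma> k) powr (-(A-g)) * (1 + t/\<sigma> l) powr (-(B-g)) * (1 + s/\<sigma> k + t/\<sigma> l) powr (-g)) \<partial>lborel) \<partial>lborel)"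
    proof (rule nn_integral_cong)
      fix s :: real
      show "(\<integral>\<^sup>+t\<in>{0..}. emeasure M {\<omega>\<in>space M. X k \<omega> > s \<and> X l \<omega> > t} \<partial>lborel) * indicator {0..} s =
        (\<integral>\<^sup>+t\<in>{0..}. ennreal ((1 + s/\<sigma> k) powr (-(A-g)) * (1 + t/\<sigma> l) powr (-(B-g)) * (1 + s/\<sigma> k + t/\<sigma> l) powr (-g)) \<partial>lborel) * indicator {0..} s"
      proof (cases "s \<ge> 0")
        case True
        have "(\<integral>\<^sup>+t\<in>{0..}. emeasure M {\<omega>\<in>space M. X k \<omega> > s \<and> X l \<omega> > t} \<partial>lborel) =
          (\<integral>\<^sup>+t\<in>{0..}. ennreal ((1 + s/\<sigma> k) powr (-(A-g)) * (1 + t/\<sigma> l) powr (-(B-g)) * (1 + s/\<sigma> k + t/\<sigma> l) powr (-g)) \<partial>lborel)"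
          by (intro nn_integral_cong) (auto simp: indicator_def emeasure_eq_measure biv[OF True])
        then show ?thesis by simp
      qed simp
    qed
    also have "\<dots> = (\<Sum>m. ennreal (pochhammer g m / fact m) * J m A (\<sigma> k) * J m B (\<sigma> l))"
      by (rule dbl_integral[OF sk sl g0])
    also have "\<dots> = ennreal (C * Hs)" unfolding C_def Hs_def
      by (rule sum_closed[OF A1 B2 g0 gA sk sl])
    finally show ?thesis .
  qed
  define \<mu>k where "\<mu>k = \<sigma> k / (A - 1)"
  define \<mu>l where "\<mu>l = \<sigma> l / (B - 1)"
  have ik: "integrable M (X k)" by (rule integrableI_nonneg[OF Xk AEk]) (simp add: Ek)
  have il: "integrable M (X l)" by (rule integrableI_nonneg[OF Xl AEl]) (simp add: El)
  have ikl: "integrable M (\<lambda>\<omega>. X k \<omega> * X l \<omega>)" by (rule integrableI_nonneg[OF _ AEp]) (simp_all add: Ekl)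
  have Ik: "integral\<^sup>L M (X k) = \<mu>k"
    using integral_eq_nn_integral[OF Xk AEk] Ek A1 sk unfolding \<mu>k_def by simp
  have Il: "integral\<^sup>L M (X l) = \<mu>l"
    using integral_eq_nn_integral[OF Xl AEl] El B1 sl unfolding \<mu>l_def by simp
  have C0: "C \<ge> 0" unfolding C_def using A1 B1 sk sl by simp
  have Hs0: "Hs \<ge> 0" unfolding Hs_def
  proof (rule suminf_nonneg)
    show "summable (\<lambda>m. pochhammer g m * fact m / (pochhammer A m * pochhammer B m))"
      by (rule summable_h[OF g0 gA B2 A1])
    show "0 \<le> pochhammer g m * fact m / (pochhammer A m * pochhammer B m)" for m
    proof -
      have "pochhammer A m > 0" "pochhammer B m > 0" using A1 B1 by (auto intro!: pochhammer_pos)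
      moreover have "pochhammer g m \<ge> 0" using g0 by (auto simp: pochhammer_prod intro!: prod_nonneg)
      ultimately show ?thesis by simp
    qed
  qed
  have Ikl: "integral\<^sup>L M (\<lambda>\<omega>. X k \<omega> * X l \<omega>) = C * Hs"
    using integral_eq_nn_integral[OF _ AEp] Ekl C0 Hs0 by simp
  have cov: "covariance M (X k) (X l) = C * Hs - \<mu>k * \<mu>l"
  proof -
    have "covariance M (X k) (X l) = integral\<^sup>L M (\<lambda>\<omega>. (X k \<omega> * X l \<omega> - \<mu>l * X k \<omega>) - (\<mu>k * X l \<omega> - \<mu>k * \<mu>l))"
      unfolding covariance_def Ik Il by (rule Bochner_Integration.integral_cong) (auto simp: algebra_simps)
    also have "\<dots> = (C * Hs - \<mu>l * \<mu>k) - (\<mu>k * \<mu>l - \<mu>k * \<mu>l)"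
      using ik il ikl Ik Il Ikl prob_space by (simp add: Bochner_Integration.integral_diff)
    finally show ?thesis by (simp add: algebra_simps)
  qed
  have hyp: "hypergeom [g, 1, 1] [A, B] 1 = Hs"
    unfolding hypergeom_def Hs_def by (simp add: pochhammer_fact[symmetric] field_simps)
  have "\<mu>k * \<mu>l = C" unfolding C_def \<mu>k_def \<mu>l_def by simp
  then have "C * Hs - \<mu>k * \<mu>l = C * (Hs - 1)" by (simp add: algebra_simps)
  then show ?thesis using cov hyp unfolding A_def[symmetric] B_def[symmetric] g_def[symmetric] C_def by simp
qed

end
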